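(* For every composition $I$ of $n\ge1$, the number of (type A) permutation tableaux of the shape encoded by $I$ is \[ \mathrm{PT}^A_I=\sum_{J\succeq I}(-1)^{\ell(I)-\ell(J)}\,\mathrm{Fact}(J), \] where the sum is over compositions $J$ of $n$ coarser than or equal to $I$ and $\mathrm{Fact}(j_1,\dots,j_p)=p^{j_1}(p-1)^{j_2}\cdots2^{j_{p-1}}1^{j_p}$.
   Context: A composition of $n$ is a sequence $I=(i_1,\dots,i_r)$ of positive integers with sum $n$; $\ell(I)=r$; $\mathrm{Des}(I)=\{i_1,i_1+i_2,\dots,i_1+\dots+i_{r-1}\}$; $J\succeq I$ ($J$ coarser than $I$) means $\mathrm{Des}(J)\subseteq\mathrm{Des}(I)$. Let $k\ge1$ and let $\lambda$ be a Young diagram with exactly $k$ rows (rows of length $0$ allowed) and exactly $n-k$ nonempty columns, drawn in French convention (rows left-justified, longest row at the bottom). Encode $\lambda$ by the composition $I=(i_1,\dots,i_k)$ of $n$ where, for $1\le t\le k$, $i_t-1$ is the number of columns of length $k-t+1$ (a bijection onto compositions of $n$ with $k$ parts). A (type A) permutation tableau of shape $\lambda$ is a filling of the boxes of $\lambda$ with $0$'s and $1$'s such that (1) every column contains at least one $1$, and (2) no box containing a $0$ has both a $1$ below it in the same column and a $1$ to its left in the same row. *)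

theory Defs
  imports Main
begin

definition is_composition :: "nat \<Rightarrow> nat list \<Rightarrow> bool" where
  "is_composition n I \<longleftrightarrow> (\<forall>x\<in>set I. 0 < x) \<and> sum_list I = n"

definition Des :: "nat list \<Rightarrow> nat set" where
  "Des I = {sum_list (take t I) | t. 1 \<le> t \<and> t < length I}"

definition coarser :: "nat list \<Rightarrow> nat list \<Rightarrow> bool" where
  "coarser J I \<longleftrightarrow> Des J \<subseteq> Des I"

definition Fact :: "nat list \<Rightarrow> nat" where
  "Fact J = (\<Prod>t<length J. (length J - t) ^ (J ! t))"

(* Column lengths of the Young diagram encoded by I = (i_1,...,i_k), columns listed
   from left to right (0-indexed): i_t - 1 columns of length k - t + 1, for t = 1..k. *)
definition col_lengths :: "nat list \<Rightarrow> nat list" where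
  "col_lengths I = concat (map (\<lambda>t. replicate (I ! t - 1) (length I - t)) [0..<length I])"

(* Boxes (r, c): column c (0-indexed from the left), row r (0-indexed from the bottom,
   French convention). *)
definition boxes :: "nat list \<Rightarrow> (nat \<times> nat) set" where
  "boxes I = {(r, c). c < length (col_lengths I) \<and> r < col_lengths I ! c}"

(* A filling is given by the set T of boxes containing 1 (all other boxes contain 0). *)
definition is_perm_tableau :: "nat list \<Rightarrow> (nat \<times> nat) set \<Rightarrow> bool" where
  "is_perm_tableau I T \<longleftrightarrow>
     T \<subseteq> boxes I \<and>
     (\<forall>c < length (col_lengths I). \<exists>r. (r, c) \<in> T) \<and>
     (\<forall>(r, c) \<in> boxes I - T. \<not> ((\<exists>r' < r. (r', c) \<in> T) \<and> (\<exists>c' < c. (r, c') \<in> T)))"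

definition PT_A :: "nat list \<Rightarrow> nat" where
  "PT_A I = card {T. is_perm_tableau I T}"

end

theory Submission imports Defs Complex_Main begin
definition gg :: "nat \<Rightarrow> real \<Rightarrow> real" where
  "gg q x = pochhammer x q / fact q"

lemma gg_D: "x * (gg q (x+1) - gg q x) = real q * gg q x"
proof -
  have "x * pochhammer (x+1) q = (x + real q) * pochhammer x q"
    using pochhammer_rec[of x q] pochhammer_rec'[of x q] by simp
  then show ?thesis unfolding gg_def by (simp add: field_simps)
qed

lemma gg_S: "x * gg q (x+1) = real (Suc q) * gg (Suc q) x"
proof -
  have "x * pochhammer (x+1) q = pochhammer x (Suc q)"
    using pochhammer_rec[of x q] by simp
  moreover have "fact (Suc q) = real (Suc q) * (fact q :: real)" by simp
  moreover have "(fact q :: real) > 0" by simp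
  ultimately show ?thesis unfolding gg_def by (simp add: divide_simps)
qed

lemma gg_1: "gg q 1 = 1"
  unfolding gg_def pochhammer_fact[symmetric] by simp

lemma sum_pow_card: "finite V \<Longrightarrow> (\<Sum>S\<in>Pow V. (x::real) ^ card S) = (1+x) ^ card V"
proof (induction V rule: finite_induct)
  case empty then show ?case by simp
next
  case (insert a V)
  have inj: "inj_on (insert a) (Pow V)" using insert.hyps
    by (smt (verit, ccfv_SIG) PowD inj_on_def insert_ident subset_iff)
  have disj: "Pow V \<inter> insert a ` Pow V = {}" using insert.hyps by auto
  have "(\<Sum>S\<in>Pow (insert a V). x ^ card S) = (\<Sum>S\<in>Pow V. x ^ card S) + (\<Sum>S\<in>insert a ` Pow V. x ^ card S)"
    unfolding Pow_insert using insert.hyps disj by (intro sum.union_disjoint) auto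
  also have "(\<Sum>S\<in>insert a ` Pow V. x ^ card S) = (\<Sum>S\<in>Pow V. x ^ card (insert a S))"
    using inj by (simp add: sum.reindex)
  also have "\<dots> = (\<Sum>S\<in>Pow V. x * x ^ card S)"
  proof (intro sum.cong refl)
    fix S assume "S \<in> Pow V"
    then have "finite S" "a \<notin> S" using insert.hyps finite_subset by auto
    then show "x ^ card (insert a S) = x * x ^ card S" by simp
  qed
  finally show ?case using insert by (simp add: sum_distrib_left[symmetric] algebra_simps)
qed

lemma lemC: "finite (U::nat set) \<Longrightarrow>
  (\<Sum>S\<in>{S. S \<subseteq> U \<and> S \<noteq> {}}. (x::real) ^ card (S \<union> {r\<in>U. \<forall>s\<in>S. r < s})) = x * ((1+x) ^ card U - x ^ card U)"
proof (induction "card U" arbitrary: U)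
  case 0
  then have "U = {}" by simp
  then show ?case by (simp add: Pow_def)
next
  case (Suc v)
  then have ne: "U \<noteq> {}" by auto
  define m where "m = Min U"
  define V where "V = U - {m}"
  have mU: "m \<in> U" using Suc ne m_def by simp
  have mmin: "\<And>r. r \<in> U \<Longrightarrow> m \<le> r" using Suc m_def by simp
  have fV: "finite V" using Suc V_def by simp
  have cV: "card V = v" using Suc mU V_def by simp
  have IH: "(\<Sum>S\<in>{S. S \<subseteq> V \<and> S \<noteq> {}}. x ^ card (S \<union> {r\<in>V. \<forall>s\<in>S. r < s})) = x * ((1+x) ^ v - x ^ v)"
    using Suc.hyps(1)[of V] fV cV by simp
  have split: "{S. S \<subseteq> U \<and> S \<noteq> {}} = insert m ` Pow V \<union> {S. S \<subseteq> V \<and> S \<noteq> {}}"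
  proof (rule set_eqI, rule iffI)
    fix S assume S: "S \<in> {S. S \<subseteq> U \<and> S \<noteq> {}}"
    show "S \<in> insert m ` Pow V \<union> {S. S \<subseteq> V \<and> S \<noteq> {}}"
    proof (cases "m \<in> S")
      case True
      then have "S = insert m (S - {m})" by auto
      moreover have "S - {m} \<in> Pow V" using S V_def by auto
      ultimately show ?thesis by blast
    next
      case False then show ?thesis using S V_def by auto
    qed
  next
    fix S assume "S \<in> insert m ` Pow V \<union> {S. S \<subseteq> V \<and> S \<noteq> {}}"
    then show "S \<in> {S. S \<subseteq> U \<and> S \<noteq> {}}" using mU V_def by auto
  qed
  have disj: "insert m ` Pow V \<inter> {S. S \<subseteq> V \<and> S \<noteq> {}} = {}" unfolding V_def by auto
  have inj: "inj_on (insert m) (Pow V)" unfolding V_def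
    by (smt (verit, ccfv_SIG) PowD inj_on_def insert_ident subset_iff Diff_iff singletonI)
  have fin2: "finite {S. S \<subseteq> V \<and> S \<noteq> {}}" using fV by simp
  have "(\<Sum>S\<in>insert m ` Pow V. x ^ card (S \<union> {r\<in>U. \<forall>s\<in>S. r < s})) = (\<Sum>S\<in>Pow V. x ^ card (insert m S \<union> {r\<in>U. \<forall>s\<in>insert m S. r < s}))"
    using inj by (simp add: sum.reindex)
  also have "\<dots> = (\<Sum>S\<in>Pow V. x * x ^ card S)"
  proof (intro sum.cong refl)
    fix S assume S: "S \<in> Pow V"
    have e: "{r\<in>U. \<forall>s\<in>insert m S. r < s} = {}" using mmin by force
    have "m \<notin> S" using S V_def by auto
    moreover have "finite S" using S fV finite_subset by auto
    ultimately show "x ^ card (insert m S \<union> {r\<in>U. \<forall>s\<in>insert m S. r < s}) = x * x ^ card S"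
      unfolding e by simp
  qed
  also have "\<dots> = x * (1+x)^v" using sum_pow_card[OF fV, of x] cV by (simp add: sum_distrib_left[symmetric])
  finally have P1: "(\<Sum>S\<in>insert m ` Pow V. x ^ card (S \<union> {r\<in>U. \<forall>s\<in>S. r < s})) = x * (1+x)^v" .
  have P2: "(\<Sum>S\<in>{S. S \<subseteq> V \<and> S \<noteq> {}}. x ^ card (S \<union> {r\<in>U. \<forall>s\<in>S. r < s})) = x * (x * ((1+x) ^ v - x ^ v))"
  proof -
    have "(\<Sum>S\<in>{S. S \<subseteq> V \<and> S \<noteq> {}}. x ^ card (S \<union> {r\<in>U. \<forall>s\<in>S. r < s})) = (\<Sum>S\<in>{S. S \<subseteq> V \<and> S \<noteq> {}}. x * x ^ card (S \<union> {r\<in>V. \<forall>s\<in>S. r < s}))"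
    proof (intro sum.cong refl)
      fix S assume S: "S \<in> {S. S \<subseteq> V \<and> S \<noteq> {}}"
      have lt: "\<And>s. s \<in> S \<Longrightarrow> m < s" using S mmin V_def by force
      have e: "S \<union> {r\<in>U. \<forall>s\<in>S. r < s} = insert m (S \<union> {r\<in>V. \<forall>s\<in>S. r < s})"
        using lt mU S unfolding V_def by auto
      have "m \<notin> S \<union> {r\<in>V. \<forall>s\<in>S. r < s}" using V_def S by auto
      moreover have "finite (S \<union> {r\<in>V. \<forall>s\<in>S. r < s})" using S fV finite_subset by auto
      ultimately show "x ^ card (S \<union> {r\<in>U. \<forall>s\<in>S. r < s}) = x * x ^ card (S \<union> {r\<in>V. \<forall>s\<in>S. r < s})"
        unfolding e by simp
    qed
    also have "\<dots> = x * (x * ((1+x) ^ v - x ^ v))" using IH by (simp add: sum_distrib_left[symmetric])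
    finally show ?thesis .
  qed
  have "(\<Sum>S\<in>{S. S \<subseteq> U \<and> S \<noteq> {}}. x ^ card (S \<union> {r\<in>U. \<forall>s\<in>S. r < s})) = x * (1+x)^v + x * (x * ((1+x) ^ v - x ^ v))"
    unfolding split using P1 P2 disj fV fin2 by (subst sum.union_disjoint) auto
  also have "\<dots> = x * ((1+x) ^ Suc v - x ^ Suc v)" by (simp add: algebra_simps)
  finally show ?case using Suc.hyps(2) by simp
qed

definition boxesL :: "nat list \<Rightarrow> (nat \<times> nat) set" where
  "boxesL L = {(r, c). c < length L \<and> r < L ! c}"

definition ZC :: "nat list \<Rightarrow> (nat \<times> nat) set \<Rightarrow> bool" where
  "ZC L T \<longleftrightarrow> (\<forall>r c. (r,c) \<in> boxesL L \<longrightarrow> (r,c) \<notin> T \<longrightarrow> (\<exists>r'<r. (r', c) \<in> T) \<longrightarrow> \<not> (\<exists>c'<c. (r, c') \<in> T))"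

definition validL :: "nat list \<Rightarrow> (nat \<times> nat) set \<Rightarrow> bool" where
  "validL L T \<longleftrightarrow> T \<subseteq> boxesL L \<and> (\<forall>c < length L. \<exists>r. (r, c) \<in> T) \<and> ZC L T"

definition unrL :: "nat list \<Rightarrow> (nat \<times> nat) set \<Rightarrow> nat \<Rightarrow> bool" where
  "unrL L T r \<longleftrightarrow> (\<forall>c. (r,c) \<in> boxesL L \<longrightarrow> (r,c) \<notin> T \<longrightarrow> \<not> (\<exists>r'<r. (r', c) \<in> T))"

definition hh :: "(nat \<times> nat) set \<Rightarrow> nat set \<Rightarrow> (nat \<times> nat) set" where
  "hh T S = (\<lambda>r. (r, 0)) ` S \<union> (\<lambda>(r, c). (r, Suc c)) ` T"

lemma hh_0[simp]: "(r, 0) \<in> hh T S \<longleftrightarrow> r \<in> S"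
  unfolding hh_def by auto
lemma hh_Suc[simp]: "(r, Suc c) \<in> hh T S \<longleftrightarrow> (r, c) \<in> T"
  unfolding hh_def by auto

lemma boxesL_0[simp]: "(r, 0) \<in> boxesL (k # L) \<longleftrightarrow> r < k"
  unfolding boxesL_def by auto
lemma boxesL_Suc[simp]: "(r, Suc c) \<in> boxesL (k # L) \<longleftrightarrow> (r, c) \<in> boxesL L"
  unfolding boxesL_def by auto

lemma hh_decomp: "T' = hh {(r,c). (r, Suc c) \<in> T'} {r. (r, 0) \<in> T'}"
proof (rule set_eqI)
  fix p :: "nat \<times> nat"
  obtain r c where p: "p = (r, c)" by (cases p)
  show "p \<in> T' \<longleftrightarrow> p \<in> hh {(r,c). (r, Suc c) \<in> T'} {r. (r, 0) \<in> T'}"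
    unfolding p by (cases c) auto
qed

lemma hh_inj: "hh T S = hh T2 S2 \<Longrightarrow> T = T2 \<and> S = S2"
proof
  assume e: "hh T S = hh T2 S2"
  show "T = T2"
  proof (rule set_eqI)
    fix p :: "nat \<times> nat"
    obtain r c where p: "p = (r, c)" by (cases p)
    show "p \<in> T \<longleftrightarrow> p \<in> T2" unfolding p using hh_Suc[of r c T S] hh_Suc[of r c T2 S2] e by simp
  qed
  show "S = S2" using e hh_0 by blast
qed

lemma sub_hh: "hh T S \<subseteq> boxesL (k # L) \<longleftrightarrow> T \<subseteq> boxesL L \<and> S \<subseteq> {..<k}"
proof
  assume a: "hh T S \<subseteq> boxesL (k # L)"
  show "T \<subseteq> boxesL L \<and> S \<subseteq> {..<k}"
  proof
    show "T \<subseteq> boxesL L"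
    proof
      fix p assume "p \<in> T"
      moreover obtain r c where p: "p = (r, c)" by (cases p)
      ultimately have "(r, Suc c) \<in> hh T S" by simp
      then have "(r, Suc c) \<in> boxesL (k # L)" using a by blast
      then show "p \<in> boxesL L" using p by simp
    qed
    show "S \<subseteq> {..<k}"
    proof
      fix r assume "r \<in> S"
      then have "(r, 0) \<in> hh T S" by simp
      then have "(r, 0) \<in> boxesL (k # L)" using a by blast
      then show "r \<in> {..<k}" by simp
    qed
  qed
next
  assume a: "T \<subseteq> boxesL L \<and> S \<subseteq> {..<k}"
  show "hh T S \<subseteq> boxesL (k # L)"
  proof
    fix p assume "p \<in> hh T S"
    moreover obtain r c where p: "p = (r, c)" by (cases p)
    ultimately show "p \<in> boxesL (k # L)" using a by (cases c) auto
  qed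
qed

lemma cols_hh: "(\<forall>c < length (k # L). \<exists>r. (r, c) \<in> hh T S) \<longleftrightarrow> S \<noteq> {} \<and> (\<forall>c < length L. \<exists>r. (r, c) \<in> T)"
  by (simp add: All_less_Suc2) blast

lemma ZC_hh: "ZC (k # L) (hh T S) \<longleftrightarrow> ZC L T \<and> (\<forall>r\<in>S. unrL L T r)"
proof
  assume a: "ZC (k # L) (hh T S)"
  show "ZC L T \<and> (\<forall>r\<in>S. unrL L T r)"
  proof
    show "ZC L T" unfolding ZC_def
    proof (intro allI impI notI)
      fix r c assume b: "(r,c) \<in> boxesL L" "(r,c) \<notin> T" "\<exists>r'<r. (r', c) \<in> T" "\<exists>c'<c. (r, c') \<in> T"
      have "(r, Suc c) \<in> boxesL (k#L)" "(r, Suc c) \<notin> hh T S" "\<exists>r'<r. (r', Suc c) \<in> hh T S"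
        "\<exists>c'<Suc c. (r, c') \<in> hh T S" using b by (auto intro: exI[of _ "Suc _"])
      then show False using a unfolding ZC_def by blast
    qed
    show "\<forall>r\<in>S. unrL L T r" unfolding unrL_def
    proof (intro ballI allI impI notI)
      fix r c assume b: "r \<in> S" "(r,c) \<in> boxesL L" "(r,c) \<notin> T" "\<exists>r'<r. (r', c) \<in> T"
      have "(r, Suc c) \<in> boxesL (k#L)" "(r, Suc c) \<notin> hh T S" "\<exists>r'<r. (r', Suc c) \<in> hh T S"
        "\<exists>c'<Suc c. (r, c') \<in> hh T S" using b by auto
      then show False using a unfolding ZC_def by blast
    qed
  qed
next
  assume a: "ZC L T \<and> (\<forall>r\<in>S. unrL L T r)"
  show "ZC (k # L) (hh T S)" unfolding ZC_def
  proof (intro allI impI notI)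
    fix r c assume b: "(r,c) \<in> boxesL (k#L)" "(r,c) \<notin> hh T S" "\<exists>r'<r. (r', c) \<in> hh T S" "\<exists>c'<c. (r, c') \<in> hh T S"
    then obtain c0 where c: "c = Suc c0" by (cases c) auto
    obtain r' where r': "r' < r" "(r', c0) \<in> T" using b c by auto
    obtain c' where c': "c' < c" "(r, c') \<in> hh T S" using b by auto
    have bb: "(r, c0) \<in> boxesL L" "(r, c0) \<notin> T" using b c by auto
    show False
    proof (cases c')
      case 0
      then have "r \<in> S" using c' by simp
      then show False using a bb r' unfolding unrL_def by blast
    next
      case (Suc c'')
      then have "c'' < c0" "(r, c'') \<in> T" using c' c by auto
      then show False using a bb r' unfolding ZC_def by blast
    qed
  qed
qed

lemma valid_hh: "validL (k # L) (hh T S) \<longleftrightarrow> validL L T \<and> S \<noteq> {} \<and> S \<subseteq> {r. r < k \<and> unrL L T r}"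
  unfolding validL_def sub_hh cols_hh ZC_hh by blast

lemma all_nat_split: "(\<forall>c::nat. P c) \<longleftrightarrow> P 0 \<and> (\<forall>c. P (Suc c))"
  using nat.exhaust by metis

lemma unr_hh: "r < k \<Longrightarrow> unrL (k # L) (hh T S) r \<longleftrightarrow> (r \<in> S \<or> (\<forall>s\<in>S. r < s)) \<and> unrL L T r"
proof -
  assume rk: "r < k"
  have "unrL (k # L) (hh T S) r \<longleftrightarrow> (r \<notin> S \<longrightarrow> \<not> (\<exists>r'<r. r' \<in> S)) \<and> unrL L T r"
    unfolding unrL_def all_nat_split[of "\<lambda>c. (r,c) \<in> boxesL (k#L) \<longrightarrow> (r,c) \<notin> hh T S \<longrightarrow> \<not> (\<exists>r'<r. (r', c) \<in> hh T S)"]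
    using rk by simp
  also have "(r \<notin> S \<longrightarrow> \<not> (\<exists>r'<r. r' \<in> S)) \<longleftrightarrow> (r \<in> S \<or> (\<forall>s\<in>S. r < s))"
  proof
    assume h: "r \<notin> S \<longrightarrow> \<not> (\<exists>r'<r. r' \<in> S)"
    show "r \<in> S \<or> (\<forall>s\<in>S. r < s)"
    proof (cases "r \<in> S")
      case False
      then have "\<And>s. s \<in> S \<Longrightarrow> r < s" using h by (metis linorder_neqE_nat)
      then show ?thesis by simp
    qed simp
  next
    assume "r \<in> S \<or> (\<forall>s\<in>S. r < s)"
    then show "r \<notin> S \<longrightarrow> \<not> (\<exists>r'<r. r' \<in> S)" by force
  qed
  finally show ?thesis by simp
qed


definition UL :: "nat \<Rightarrow> nat list \<Rightarrow> (nat \<times> nat) set \<Rightarrow> nat set" where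
  "UL k L T = {r. r < k \<and> unrL L T r}"

definition WL :: "nat \<Rightarrow> nat list \<Rightarrow> real \<Rightarrow> real" where
  "WL k L x = (\<Sum>T\<in>{T. validL L T}. x ^ card (UL k L T))"

lemma finite_boxesL: "finite (boxesL L)"
proof -
  have "boxesL L \<subseteq> {..<sum_list L} \<times> {..<length L}"
  proof
    fix p assume "p \<in> boxesL L"
    then obtain r c where p: "p = (r,c)" "c < length L" "r < L ! c" unfolding boxesL_def by auto
    have "L ! c \<le> sum_list L" using p(2) by (simp add: member_le_sum_list)
    then show "p \<in> {..<sum_list L} \<times> {..<length L}" using p by auto
  qed
  then show ?thesis by (rule finite_subset) auto
qed

lemma finite_valid: "finite {T. validL L T}"
proof -
  have "{T. validL L T} \<subseteq> Pow (boxesL L)" unfolding validL_def by auto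
  moreover have "finite (Pow (boxesL L))" using finite_boxesL by simp
  ultimately show ?thesis by (rule finite_subset)
qed

lemma finite_UL: "finite (UL k L T)"
proof -
  have "UL k L T \<subseteq> {..<k}" unfolding UL_def by auto
  then show ?thesis by (rule finite_subset) simp
qed

lemma UL_hh: "S \<subseteq> UL k L T \<Longrightarrow> UL k (k # L) (hh T S) = S \<union> {r\<in>UL k L T. \<forall>s\<in>S. r < s}"
  unfolding UL_def using unr_hh[of _ k L T S] by auto

lemma W_step: "WL k (k # L) x = x * (WL k L (x+1) - WL k L x)"
proof -
  define Dom where "Dom = Sigma {T. validL L T} (\<lambda>T. {S. S \<subseteq> UL k L T \<and> S \<noteq> {}})"
  have img: "{T'. validL (k # L) T'} = (\<lambda>(T,S). hh T S) ` Dom"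
  proof (rule set_eqI, rule iffI)
    fix T' assume "T' \<in> {T'. validL (k # L) T'}"
    then have v: "validL (k # L) (hh {(r,c). (r, Suc c) \<in> T'} {r. (r, 0) \<in> T'})"
      using hh_decomp[of T'] by simp
    have "({(r,c). (r, Suc c) \<in> T'}, {r. (r, 0) \<in> T'}) \<in> Dom"
      using v unfolding valid_hh Dom_def UL_def by auto
    then show "T' \<in> (\<lambda>(T,S). hh T S) ` Dom" using hh_decomp[of T'] by force
  next
    fix T' assume "T' \<in> (\<lambda>(T,S). hh T S) ` Dom"
    then show "T' \<in> {T'. validL (k # L) T'}" unfolding Dom_def UL_def by (auto simp: valid_hh)
  qed
  have inj: "inj_on (\<lambda>(T,S). hh T S) Dom"
    unfolding inj_on_def using hh_inj by auto
  have "WL k (k # L) x = (\<Sum>p\<in>Dom. x ^ card (UL k (k # L) ((\<lambda>(T,S). hh T S) p)))"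
    unfolding WL_def img using inj by (simp add: sum.reindex)
  also have "\<dots> = (\<Sum>(T,S)\<in>Dom. x ^ card (S \<union> {r\<in>UL k L T. \<forall>s\<in>S. r < s}))"
    by (intro sum.cong refl) (auto simp: Dom_def UL_hh)
  also have "\<dots> = (\<Sum>T\<in>{T. validL L T}. \<Sum>S\<in>{S. S \<subseteq> UL k L T \<and> S \<noteq> {}}. x ^ card (S \<union> {r\<in>UL k L T. \<forall>s\<in>S. r < s}))"
    unfolding Dom_def using finite_valid finite_UL by (subst sum.Sigma) auto
  also have "\<dots> = (\<Sum>T\<in>{T. validL L T}. x * ((1+x) ^ card (UL k L T) - x ^ card (UL k L T)))"
    by (intro sum.cong refl) (rule lemC[OF finite_UL])
  also have "\<dots> = x * (WL k L (x+1) - WL k L x)"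
    unfolding WL_def sum_subtractf[symmetric] sum_distrib_left by (simp add: add.commute)
  finally show ?thesis .
qed

lemma Des_Cons: "Des (x # xs) = (if xs = [] then {} else insert x ((+) x ` Des xs))"
proof (cases "xs = []")
  case True then show ?thesis unfolding Des_def by auto
next
  case False
  have "Des (x # xs) = {sum_list (take t (x # xs)) | t. 1 \<le> t \<and> t < Suc (length xs)}"
    unfolding Des_def by simp
  also have "\<dots> = insert x ((+) x ` Des xs)"
  proof (rule set_eqI, rule iffI)
    fix y assume "y \<in> {sum_list (take t (x # xs)) | t. 1 \<le> t \<and> t < Suc (length xs)}"
    then obtain t where t: "1 \<le> t" "t < Suc (length xs)" "y = sum_list (take t (x # xs))" by blast
    then obtain s where s: "t = Suc s" by (cases t) auto
    show "y \<in> insert x ((+) x ` Des xs)"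
    proof (cases s)
      case 0 then show ?thesis using t s by simp
    next
      case (Suc s')
      then have "sum_list (take s xs) \<in> Des xs" unfolding Des_def using t s by auto
      then show ?thesis using t s by simp
    qed
  next
    fix y assume "y \<in> insert x ((+) x ` Des xs)"
    then consider "y = x" | s where "1 \<le> s" "s < length xs" "y = x + sum_list (take s xs)"
      unfolding Des_def by auto
    then show "y \<in> {sum_list (take t (x # xs)) | t. 1 \<le> t \<and> t < Suc (length xs)}"
    proof cases
      case 1 then show ?thesis using False
        by (intro CollectI exI[of _ 1]) (auto simp: neq_Nil_conv)
    next
      case 2 then show ?thesis by (intro CollectI exI[of _ "Suc s"]) auto
    qed
  qed
  finally show ?thesis using False by simp
qed

lemma Des_pos: "\<forall>y\<in>set J. 0 < y \<Longrightarrow> d \<in> Des J \<Longrightarrow> 0 < d"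
proof -
  assume p: "\<forall>y\<in>set J. 0 < y" and d: "d \<in> Des J"
  then obtain t where t: "1 \<le> t" "t < length J" "d = sum_list (take t J)" unfolding Des_def by auto
  obtain j J' where J: "J = j # J'" using t by (cases J) auto
  obtain t' where t': "t = Suc t'" using t by (cases t) auto
  then have "d = j + sum_list (take t' J')" using t J by simp
  moreover have "j > 0" using p J by simp
  ultimately show ?thesis by simp
qed

lemma sum_pos: "\<forall>y\<in>set J. 0 < y \<Longrightarrow> J \<noteq> [] \<Longrightarrow> 0 < sum_list (J::nat list)"
  by (metis neq_Nil_conv sum_list.Cons add_gr_0 list.set_intros(1))

definition CC :: "nat list \<Rightarrow> nat list set" where
  "CC I = {J. is_composition (sum_list I) J \<and> coarser J I}"

lemma CC_Nil: "CC [] = {[]}"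
proof (rule set_eqI, rule iffI)
  fix J :: "nat list" assume "J \<in> CC []"
  then have "\<forall>x\<in>set J. 0<x" "sum_list J = 0" unfolding CC_def is_composition_def by auto
  then have "J = []" using sum_pos by (metis less_irrefl)
  then show "J \<in> {[]}" by simp
next
  fix J :: "nat list" assume "J \<in> {[]}" then show "J \<in> CC []" unfolding CC_def is_composition_def coarser_def by simp
qed

lemma CC_Cons:
  assumes a: "0 < a" and pI: "\<forall>y\<in>set I. 0 < y"
  shows "CC (a # I) = (\<lambda>J. a # J) ` CC I \<union> (\<lambda>K. (a + hd K) # tl K) ` (CC I - {[]})"
proof (rule set_eqI, rule iffI)
  fix J assume J: "J \<in> CC (a # I)"
  then have pJ: "\<forall>y\<in>set J. 0 < y" and sJ: "sum_list J = a + sum_list I" and dJ: "Des J \<subseteq> Des (a # I)"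
    unfolding CC_def is_composition_def coarser_def by auto
  then have "J \<noteq> []" using a by auto
  then obtain j J' where jJ: "J = j # J'" by (cases J) auto
  show "J \<in> (\<lambda>J. a # J) ` CC I \<union> (\<lambda>K. (a + hd K) # tl K) ` (CC I - {[]})"
  proof (cases "J' = []")
    case True
    then have j: "j = a + sum_list I" using sJ jJ by simp
    show ?thesis
    proof (cases "I = []")
      case True
      then have "J = a # []" using j jJ \<open>J' = []\<close> by simp
      moreover have "[] \<in> CC I" using True CC_Nil by simp
      ultimately show ?thesis by blast
    next
      case False
      then have pos: "0 < sum_list I" using sum_pos pI by blast
      have "[sum_list I] \<in> CC I - {[]}" unfolding CC_def is_composition_def coarser_def Des_def
        using pos by auto
      moreover have "J = (\<lambda>K. (a + hd K) # tl K) [sum_list I]" using j jJ \<open>J' = []\<close> by simp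
      ultimately show ?thesis by blast
    qed
  next
    case False
    have pJ': "\<forall>y\<in>set J'. 0 < y" using pJ jJ by simp
    have DJ: "Des J = insert j ((+) j ` Des J')" using jJ False Des_Cons by simp
    have "I \<noteq> []" using dJ DJ by (auto simp: Des_Cons)
    then have DI: "Des (a # I) = insert a ((+) a ` Des I)" using Des_Cons by simp
    have sJ': "sum_list J' = a + sum_list I - j" using sJ jJ by simp
    have "j \<in> Des (a # I)" using dJ DJ by auto
    then consider "j = a" | d where "d \<in> Des I" "j = a + d" using DI by auto
    then show ?thesis
    proof cases
      case 1
      have "Des J' \<subseteq> Des I"
      proof
        fix y assume y: "y \<in> Des J'"
        then have "j + y \<in> Des (a # I)" using dJ DJ by auto
        moreover have "0 < y" using Des_pos[OF pJ' y] .
        ultimately show "y \<in> Des I" using DI 1 by auto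
      qed
      then have "J' \<in> CC I" unfolding CC_def is_composition_def coarser_def using pJ' sJ' 1 by simp
      then show ?thesis using jJ 1 by blast
    next
      case 2
      have d0: "0 < d" using Des_pos[OF pI 2(1)] .
      have "Des (d # J') \<subseteq> Des I"
      proof
        fix y assume "y \<in> Des (d # J')"
        then consider "y = d" | z where "z \<in> Des J'" "y = d + z" using False Des_Cons by auto
        then show "y \<in> Des I"
        proof cases
          case 1 then show ?thesis using 2 by simp
        next
          case (2 z)
          then have "j + z \<in> Des (a # I)" using dJ DJ by auto
          moreover have "0 < z" using Des_pos[OF pJ' 2(1)] .
          ultimately show ?thesis using DI \<open>j = a + d\<close> 2 by auto
        qed
      qed
      moreover have "sum_list (d # J') = sum_list I" using sJ jJ 2 by simp
      ultimately have "d # J' \<in> CC I - {[]}" unfolding CC_def is_composition_def coarser_def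
        using pJ' d0 by simp
      moreover have "J = (\<lambda>K. (a + hd K) # tl K) (d # J')" using jJ 2 by simp
      ultimately show ?thesis by blast
    qed
  qed
next
  fix J assume "J \<in> (\<lambda>J. a # J) ` CC I \<union> (\<lambda>K. (a + hd K) # tl K) ` (CC I - {[]})"
  then consider J' where "J' \<in> CC I" "J = a # J'" | K where "K \<in> CC I" "K \<noteq> []" "J = (a + hd K) # tl K"
    by blast
  then show "J \<in> CC (a # I)"
  proof cases
    case 1
    then have pJ': "\<forall>y\<in>set J'. 0 < y" and sJ': "sum_list J' = sum_list I" and dJ': "Des J' \<subseteq> Des I"
      unfolding CC_def is_composition_def coarser_def by auto
    have "Des (a # J') \<subseteq> Des (a # I)"
    proof (cases "J' = []")
      case True then show ?thesis by (simp add: Des_Cons)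
    next
      case False
      then have "I \<noteq> []" using sJ' sum_pos[OF pJ'] by auto
      then show ?thesis using False dJ' by (auto simp: Des_Cons)
    qed
    then show ?thesis unfolding CC_def is_composition_def coarser_def using 1 pJ' sJ' a by simp
  next
    case 2
    then obtain j K' where K: "K = j # K'" by (cases K) auto
    have pK: "\<forall>y\<in>set K. 0 < y" and sK: "sum_list K = sum_list I" and dK: "Des K \<subseteq> Des I"
      using 2 unfolding CC_def is_composition_def coarser_def by auto
    have "Des ((a + j) # K') \<subseteq> Des (a # I)"
    proof (cases "K' = []")
      case True then show ?thesis by (simp add: Des_Cons)
    next
      case False
      then have "I \<noteq> []" using sK K pK by auto
      then show ?thesis using False dK K by (auto simp: Des_Cons)
    qed
    then show ?thesis unfolding CC_def is_composition_def coarser_def using 2 K pK sK a by simp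
  qed
qed


lemma col_lengths_Cons: "col_lengths (i # I) = replicate (i - 1) (Suc (length I)) @ col_lengths I"
proof -
  have u: "[0..<Suc m] = 0 # map Suc [0..<m]" for m
  proof -
    have "map Suc [0..<m] = [1..<Suc m]" by (simp add: map_Suc_upt)
    moreover have "[0..<Suc m] = 0 # [1..<Suc m]" by (simp add: upt_conv_Cons)
    ultimately show ?thesis by simp
  qed
  have "[0..<length (i # I)] = 0 # map Suc [0..<length I]"
    unfolding length_Cons by (rule u)
  then show ?thesis unfolding col_lengths_def by (simp add: comp_def)
qed

lemma col_lengths_Nil: "col_lengths [] = []" unfolding col_lengths_def by simp

lemma col_le: "l \<in> set (col_lengths I) \<Longrightarrow> l \<le> length I"
  unfolding col_lengths_def by auto

lemma perm_valid: "is_perm_tableau I T \<longleftrightarrow> validL (col_lengths I) T"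
  unfolding is_perm_tableau_def validL_def ZC_def boxes_def boxesL_def by blast

definition WW :: "nat list \<Rightarrow> real \<Rightarrow> real" where
  "WW I x = WL (length I) (col_lengths I) x"

lemma PT_WW: "real (PT_A I) = WW I 1"
  unfolding PT_A_def WW_def WL_def perm_valid by simp

lemma WW_Nil: "WW [] x = 1"
proof -
  have "{T. validL [] T} = {{}}" unfolding validL_def boxesL_def ZC_def by auto
  moreover have "UL 0 [] {} = {}" unfolding UL_def by simp
  ultimately show ?thesis unfolding WW_def WL_def col_lengths_Nil by simp
qed

lemma WW_one: "WW (1 # I) x = x * WW I x"
proof -
  let ?L = "col_lengths I" and ?k = "length I"
  have cl: "col_lengths (1 # I) = ?L" using col_lengths_Cons[of 1 I] by simp
  have U: "UL (Suc ?k) ?L T = insert ?k (UL ?k ?L T)" for T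
  proof -
    have "unrL ?L T ?k" unfolding unrL_def boxesL_def
      using col_le[of _ I] by (auto simp: nth_mem) (meson leD nth_mem)
    then show ?thesis unfolding UL_def by auto
  qed
  have "WW (1 # I) x = (\<Sum>T\<in>{T. validL ?L T}. x ^ card (insert ?k (UL ?k ?L T)))"
    unfolding WW_def WL_def cl using U by simp
  also have "\<dots> = (\<Sum>T\<in>{T. validL ?L T}. x * x ^ card (UL ?k ?L T))"
    using finite_UL by (intro sum.cong refl) (simp add: UL_def)
  also have "\<dots> = x * WW I x" unfolding WW_def WL_def by (simp add: sum_distrib_left)
  finally show ?thesis .
qed

lemma WW_Suc: "0 < a \<Longrightarrow> WW (Suc a # I) x = x * (WW (a # I) (x+1) - WW (a # I) x)"
proof -
  assume a: "0 < a"
  have "col_lengths (Suc a # I) = Suc (length I) # col_lengths (a # I)"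
    using a by (cases a) (simp_all add: col_lengths_Cons)
  then show ?thesis unfolding WW_def using W_step[of "Suc (length I)" "col_lengths (a # I)" x] by simp
qed

lemma Fact_Cons: "Fact (a # J) = (Suc (length J)) ^ a * Fact J"
  unfolding Fact_def length_Cons prod.lessThan_Suc_shift by simp

definition RR :: "nat list \<Rightarrow> real \<Rightarrow> real" where
  "RR I x = (\<Sum>J\<in>CC I. (-1) ^ (length I - length J) * real (Fact J) * gg (length J) x)"

definition EE :: "nat \<Rightarrow> nat list \<Rightarrow> real \<Rightarrow> real" where
  "EE a I x = (\<Sum>J\<in>CC I. (-1) ^ (length I - length J) * real (Fact J) *
      (real (Suc (length J)) ^ a * gg (Suc (length J)) x - real (length J) ^ a * gg (length J) x))"

lemma CC_props: "\<forall>y\<in>set I. 0 < y \<Longrightarrow> finite (CC I) \<and> (\<forall>J\<in>CC I. length J \<le> length I)"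
proof (induction I)
  case Nil then show ?case by (simp add: CC_Nil)
next
  case (Cons a I)
  then have a: "0 < a" and pI: "\<forall>y\<in>set I. 0 < y" by auto
  have IH: "finite (CC I)" "\<forall>J\<in>CC I. length J \<le> length I" using Cons pI by auto
  show ?case unfolding CC_Cons[OF a pI] using IH by auto
qed

lemma RR_Cons: assumes a: "0 < a" and pI: "\<forall>y\<in>set I. 0 < y" shows "RR (a # I) x = EE a I x"
proof -
  have fin: "finite (CC I)" and len: "\<And>J. J \<in> CC I \<Longrightarrow> length J \<le> length I" using CC_props[OF pI] by auto
  define sg where "sg J = ((-1::real) ^ (length I - length J))" for J :: "nat list"
  have disj: "(\<lambda>J. a # J) ` CC I \<inter> (\<lambda>K. (a + hd K) # tl K) ` (CC I - {[]}) = {}"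
  proof -
    have "\<And>K. K \<in> CC I \<Longrightarrow> K \<noteq> [] \<Longrightarrow> 0 < hd K" unfolding CC_def is_composition_def by auto
    then show ?thesis by force
  qed
  have inj1: "inj_on (\<lambda>J. a # J) (CC I)" by (simp add: inj_on_def)
  have inj2: "inj_on (\<lambda>K. (a + hd K) # tl K) (CC I - {[]})"
    unfolding inj_on_def by (metis DiffE add_left_cancel list.collapse list.inject singletonI)
  have "RR (a # I) x = (\<Sum>J\<in>CC I. (-1) ^ (length (a#I) - length (a#J)) * real (Fact (a#J)) * gg (length (a#J)) x)
     + (\<Sum>K\<in>CC I - {[]}. (-1) ^ (length (a#I) - length ((a + hd K) # tl K)) * real (Fact ((a + hd K) # tl K)) * gg (length ((a + hd K) # tl K)) x)"
    unfolding RR_def CC_Cons[OF a pI] using fin disj inj1 inj2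
    by (subst sum.union_disjoint) (auto simp: sum.reindex)
  also have "(\<Sum>J\<in>CC I. (-1) ^ (length (a#I) - length (a#J)) * real (Fact (a#J)) * gg (length (a#J)) x)
      = (\<Sum>J\<in>CC I. sg J * real (Fact J) * (real (Suc (length J)) ^ a * gg (Suc (length J)) x))"
    by (intro sum.cong refl) (simp add: sg_def Fact_Cons)
  also have "(\<Sum>K\<in>CC I - {[]}. (-1) ^ (length (a#I) - length ((a + hd K) # tl K)) * real (Fact ((a + hd K) # tl K)) * gg (length ((a + hd K) # tl K)) x)
      = (\<Sum>K\<in>CC I - {[]}. - (sg K * real (Fact K) * (real (length K) ^ a * gg (length K) x)))"
  proof (intro sum.cong refl)
    fix K assume K: "K \<in> CC I - {[]}"
    then obtain j K' where jK: "K = j # K'" by (cases K) auto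
    have le: "length K \<le> length I" using K len by auto
    have s: "(-1::real) ^ (length (a#I) - length K) = - sg K"
    proof -
      have "length (a#I) - length K = Suc (length I - length K)" using le by simp
      then show ?thesis unfolding sg_def by simp
    qed
    have f: "Fact ((a + j) # K') = length K ^ a * Fact K" using jK by (simp add: Fact_Cons power_add)
    show "(-1) ^ (length (a#I) - length ((a + hd K) # tl K)) * real (Fact ((a + hd K) # tl K)) * gg (length ((a + hd K) # tl K)) x
      = - (sg K * real (Fact K) * (real (length K) ^ a * gg (length K) x))"
      using s f jK by simp
  qed
  also have "(\<Sum>K\<in>CC I - {[]}. - (sg K * real (Fact K) * (real (length K) ^ a * gg (length K) x)))
     = (\<Sum>K\<in>CC I. - (sg K * real (Fact K) * (real (length K) ^ a * gg (length K) x)))"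
    using fin a by (intro sum.mono_neutral_left) auto
  finally show ?thesis unfolding EE_def sg_def[symmetric]
    by (simp add: sum_subtractf[symmetric] sum.distrib[symmetric] algebra_simps sum_negf)
qed

lemma WW_EE: assumes a: "0 < a" and IH: "\<And>x. WW I x = RR I x" shows "WW (a # I) x = EE a I x"
  using a
proof (induction a arbitrary: x)
  case 0 then show ?case by simp
next
  case (Suc a)
  show ?case
  proof (cases "a = 0")
    case True
    have "WW (Suc a # I) x = x * RR I x" using True WW_one IH by simp
    also have "\<dots> = EE (Suc a) I x" unfolding RR_def EE_def True sum_distrib_left
    proof (intro sum.cong refl)
      fix J :: "nat list"
      have e: "real (Suc (length J)) * gg (Suc (length J)) x - real (length J) * gg (length J) x = x * gg (length J) x"
        using gg_S[of x "length J"] gg_D[of x "length J"] by (simp add: algebra_simps)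
      show "x * ((-1) ^ (length I - length J) * real (Fact J) * gg (length J) x) =
         (-1) ^ (length I - length J) * real (Fact J) * (real (Suc (length J)) ^ Suc 0 * gg (Suc (length J)) x - real (length J) ^ Suc 0 * gg (length J) x)"
        using e by (simp add: algebra_simps)
    qed
    finally show ?thesis .
  next
    case False
    then have a0: "0 < a" by simp
    have "WW (Suc a # I) x = x * (EE a I (x+1) - EE a I x)" using WW_Suc[OF a0] Suc.IH[OF a0] by simp
    also have "\<dots> = EE (Suc a) I x" unfolding EE_def sum_subtractf[symmetric] sum_distrib_left
    proof (intro sum.cong refl)
      fix J :: "nat list"
      define p where "p = length J"
      have e1: "x * (gg (Suc p) (x+1) - gg (Suc p) x) = real (Suc p) * gg (Suc p) x" by (rule gg_D)
      have e2: "x * (gg p (x+1) - gg p x) = real p * gg p x" by (rule gg_D)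
      have "x * ((real (Suc p) ^ a * gg (Suc p) (x+1) - real p ^ a * gg p (x+1)) - (real (Suc p) ^ a * gg (Suc p) x - real p ^ a * gg p x))
          = real (Suc p) ^ a * (x * (gg (Suc p) (x+1) - gg (Suc p) x)) - real p ^ a * (x * (gg p (x+1) - gg p x))"
        by (simp add: algebra_simps)
      also have "\<dots> = real (Suc p) ^ Suc a * gg (Suc p) x - real p ^ Suc a * gg p x"
        unfolding e1 e2 by (simp add: algebra_simps)
      finally have e: "x * ((real (Suc p) ^ a * gg (Suc p) (x+1) - real p ^ a * gg p (x+1)) - (real (Suc p) ^ a * gg (Suc p) x - real p ^ a * gg p x))
          = real (Suc p) ^ Suc a * gg (Suc p) x - real p ^ Suc a * gg p x" .
      define c where "c = (-1::real) ^ (length I - length J) * real (Fact J)"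
      define A1 where "A1 = real (Suc p) ^ a * gg (Suc p) (x+1) - real p ^ a * gg p (x+1)"
      define A0 where "A0 = real (Suc p) ^ a * gg (Suc p) x - real p ^ a * gg p x"
      have "x * (c * A1 - c * A0) = c * (x * (A1 - A0))" by (simp add: algebra_simps)
      also have "\<dots> = c * (real (Suc p) ^ Suc a * gg (Suc p) x - real p ^ Suc a * gg p x)"
        using e unfolding A1_def A0_def by simp
      finally show "x * ((-1) ^ (length I - length J) * real (Fact J) * (real (Suc (length J)) ^ a * gg (Suc (length J)) (x + 1) - real (length J) ^ a * gg (length J) (x + 1)) -
              (-1) ^ (length I - length J) * real (Fact J) * (real (Suc (length J)) ^ a * gg (Suc (length J)) x - real (length J) ^ a * gg (length J) x)) =
         (-1) ^ (length I - length J) * real (Fact J) * (real (Suc (length J)) ^ Suc a * gg (Suc (length J)) x - real (length J) ^ Suc a * gg (length J) x)"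
        unfolding c_def A1_def A0_def p_def by simp
    qed
    finally show ?thesis .
  qed
qed

lemma WW_RR: "\<forall>y\<in>set I. 0 < y \<Longrightarrow> WW I x = RR I x"
proof (induction I arbitrary: x)
  case Nil
  have "RR [] x = 1" unfolding RR_def CC_Nil gg_def Fact_def by simp
  then show ?case using WW_Nil by simp
next
  case (Cons a I)
  then have a: "0 < a" and pI: "\<forall>y\<in>set I. 0 < y" by auto
  have "WW (a # I) x = EE a I x" using WW_EE[OF a] Cons.IH pI by blast
  then show ?case using RR_Cons[OF a pI] by simp
qed

theorem mainTheorem2:
  fixes n :: nat and I :: "nat list"
  assumes "n \<ge> 1" and "is_composition n I"
  shows "int (PT_A I) =
    (\<Sum>J\<in>{J. is_composition n J \<and> coarser J I}.
        (-1) ^ (length I - length J) * int (Fact J))"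
proof -
  have pI: "\<forall>y\<in>set I. 0 < y" and sI: "sum_list I = n" using assms(2) unfolding is_composition_def by auto
  have S: "{J. is_composition n J \<and> coarser J I} = CC I" unfolding CC_def sI ..
  have "real (PT_A I) = RR I 1" using PT_WW WW_RR[OF pI] by simp
  also have "\<dots> = (\<Sum>J\<in>CC I. (-1) ^ (length I - length J) * real (Fact J))"
    unfolding RR_def gg_1 by simp
  finally have "real_of_int (int (PT_A I)) = real_of_int (\<Sum>J\<in>CC I. (-1) ^ (length I - length J) * int (Fact J))"
    by simp
  then show ?thesis unfolding S by (rule of_int_eq_iff[THEN iffD1])
qed

end
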